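(* Let $n\ge 5$ and let $X$ be a nonempty set of Latin squares of order $n$ such that for every $L\in X$ and every permutation $\sigma$ of $[1,n]$, the square $\sigma(L)$ also lies in $X$. Let $m$ be the maximum inner distance of a square in $X$. Then for every integer $k\in[1,m]$ there exists a square in $X$ of inner distance $k$.
   Context: Symbols are $[1,n]=\{1,\dots,n\}$. For $a,b\in[1,n]$, $\mathrm{dist}(a,b)$ is the minimum of the residues of $a-b$ and $b-a$ modulo $n$ (in $[0,n-1]$). A Latin square of order $n$ is an $n\times n$ matrix with entries in $[1,n]$ in which every row and column contains each symbol exactly once. Cells are adjacent if they share an edge horizontally or vertically; the inner distance of a Latin square is the minimum of $\mathrm{dist}$ over symbols in adjacent cells. For a permutation $\sigma$ of $[1,n]$, $\sigma(L)$ is the square whose $(i,j)$ entry is $\sigma(m_{i,j})$. *)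

theory Defs
  imports Main "HOL-Combinatorics.Permutations"
begin

text \<open>A Latin square of order n is represented as a function
  L :: nat => nat => nat, where L i j is the entry in row i, column j for
  i, j in {1..n}; outside this range the function is required to be 0 so that
  squares are determined by their n x n entries.\<close>

definition cdist :: "nat \<Rightarrow> nat \<Rightarrow> nat \<Rightarrow> nat" where
  "cdist n a b = nat (min ((int a - int b) mod int n) ((int b - int a) mod int n))"

definition latin_square :: "nat \<Rightarrow> (nat \<Rightarrow> nat \<Rightarrow> nat) \<Rightarrow> bool" where
  "latin_square n L \<longleftrightarrow>
     (\<forall>i j. (i \<notin> {1..n} \<or> j \<notin> {1..n}) \<longrightarrow> L i j = 0) \<and>
     (\<forall>i\<in>{1..n}. bij_betw (\<lambda>j. L i j) {1..n} {1..n}) \<and>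
     (\<forall>j\<in>{1..n}. bij_betw (\<lambda>i. L i j) {1..n} {1..n})"

definition adjacent_cells :: "nat \<Rightarrow> ((nat \<times> nat) \<times> (nat \<times> nat)) set" where
  "adjacent_cells n = {((i, j), (i', j')). i \<in> {1..n} \<and> j \<in> {1..n} \<and> i' \<in> {1..n} \<and> j' \<in> {1..n} \<and>
       ((i = i' \<and> (j' = j + 1 \<or> j = j' + 1)) \<or> (j = j' \<and> (i' = i + 1 \<or> i = i' + 1)))}"

definition inner_distance :: "nat \<Rightarrow> (nat \<Rightarrow> nat \<Rightarrow> nat) \<Rightarrow> nat" where
  "inner_distance n L = Min ((\<lambda>((i, j), (i', j')). cdist n (L i j) (L i' j')) ` adjacent_cells n)"

definition perm_square :: "nat \<Rightarrow> (nat \<Rightarrow> nat) \<Rightarrow> (nat \<Rightarrow> nat \<Rightarrow> nat) \<Rightarrow> (nat \<Rightarrow> nat \<Rightarrow> nat)" where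
  "perm_square n \<sigma> L = (\<lambda>i j. if i \<in> {1..n} \<and> j \<in> {1..n} then \<sigma> (L i j) else 0)"

end

theory Submission
  imports Defs
begin

definition DD :: "int \<Rightarrow> int \<Rightarrow> int" where
  "DD n z = min (z mod n) ((-z) mod n)"

lemma cdist_D: "cdist n a b = nat (DD (int n) (int a - int b))"
  unfolding cdist_def DD_def by (simp add: min.commute)

lemma D_le: assumes "n > 0" "z' mod n = z mod n" shows "DD n z \<le> \<bar>z'\<bar>"
proof (cases "z' \<ge> 0")
  case True
  then have "z' mod n \<le> z'" using assms by (metis zmod_le_nonneg_dividend)
  then show ?thesis using assms True unfolding DD_def by simp
next
  case False
  have "(-z) mod n = (-z') mod n" using assms(2) by (metis mod_minus_eq)
  moreover have "(-z') mod n \<le> -z'" using False assms by (simp add: zmod_le_nonneg_dividend)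
  ultimately show ?thesis using False unfolding DD_def by simp
qed

lemma D_rep: assumes "n > 0" shows "\<exists>z'. z' mod n = z mod n \<and> \<bar>z'\<bar> = DD n z"
proof (cases "z mod n \<le> (-z) mod n")
  case True
  then show ?thesis using assms by (intro exI[of _ "z mod n"]) (simp add: DD_def)
next
  case False
  have "(- ((-z) mod n)) mod n = z mod n" by (metis minus_minus mod_minus_eq mod_mod_trivial)
  then show ?thesis using False assms by (intro exI[of _ "- ((-z) mod n)"]) (simp add: DD_def)
qed

lemma D_tri: assumes "n > 0" shows "DD n (x + y) \<le> DD n x + DD n y"
proof -
  obtain x' where x: "x' mod n = x mod n" "\<bar>x'\<bar> = DD n x" using D_rep assms by blast
  obtain y' where y: "y' mod n = y mod n" "\<bar>y'\<bar> = DD n y" using D_rep assms by blast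
  have "(x' + y') mod n = (x + y) mod n" using x y by (metis mod_add_cong)
  then have "DD n (x+y) \<le> \<bar>x' + y'\<bar>" using D_le assms by blast
  then show ?thesis using x y by linarith
qed

lemma D_cong: "z mod n = w mod n \<Longrightarrow> DD n z = DD n w"
  unfolding DD_def by (metis mod_minus_eq)

lemma D_neg: "DD n (-z) = DD n z"
  unfolding DD_def by (simp add: min.commute)

lemma D_small: assumes "0 \<le> t" "2 * t \<le> n" "n > 0" shows "DD n t = t"
proof (cases "t = 0")
  case True then show ?thesis by (simp add: DD_def)
next
  case False
  then have "t < n" using assms by linarith
  then have "t mod n = t" using assms by simp
  moreover have "(-t) mod n = n - t" using False assms \<open>t < n\<close>
    by (simp add: zmod_zminus1_eq_if)
  ultimately show ?thesis using assms unfolding DD_def by simp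
qed

lemma D_half: assumes "n > 0" shows "2 * DD n z \<le> n" "0 \<le> DD n z"
proof -
  have r: "0 \<le> z mod n" "z mod n < n" using assms by auto
  show "2 * DD n z \<le> n"
    using r unfolding DD_def by (auto simp add: zmod_zminus1_eq_if min_def)
  show "0 \<le> DD n z" using assms unfolding DD_def by simp
qed

lemma cdist_sym: "cdist n a b = cdist n b a"
  unfolding cdist_def by (simp add: min.commute)

lemma cdist_self: "cdist n a a = 0"
  unfolding cdist_def by simp

lemma cdist_tri: assumes "n > 0" shows "cdist n x z \<le> cdist n x y + cdist n y z"
proof -
  have "DD (int n) (int x - int z) \<le> DD (int n) (int x - int y) + DD (int n) (int y - int z)"
    using D_tri[of "int n" "int x - int y" "int y - int z"] assms by simp
  moreover have "0 \<le> DD (int n) w" for w using D_half assms by simp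
  ultimately show ?thesis unfolding cdist_D by (simp add: nat_add_distrib[symmetric])
qed

lemma cdist_le: "n > 0 \<Longrightarrow> cdist n a b \<le> n"
  unfolding cdist_D using D_half[of "int n" "int a - int b"] by simp

lemma cdist_half: "n > 0 \<Longrightarrow> 2 * cdist n a b \<le> n"
  unfolding cdist_D using D_half[of "int n" "int a - int b"] by simp

lemma exists_v:
  assumes n: "n > 0" and a: "a \<in> {1..n}" and b: "b \<in> {1..n}" and ab: "cdist n a b = M" and k: "k \<le> M"
  shows "\<exists>v\<in>{1..n}. cdist n a v = M - k \<and> cdist n v b = k"
proof -
  define N where "N = int n"
  have N: "N > 0" using n N_def by simp
  have hM: "2 * int M \<le> N" using cdist_half[OF n, of a b] ab N_def by simp
  have "DD N (int b - int a) = int M"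
    using ab cdist_sym[of n a b] D_half[OF N] unfolding cdist_D N_def by fastforce
  then obtain z' where z: "z' mod N = (int b - int a) mod N" "\<bar>z'\<bar> = int M" using D_rep[OF N] by metis
  define s where "s = (if z' \<ge> 0 then int M - int k else - (int M - int k))"
  define q where "q = (int a - 1 + s) div N"
  define w where "w = (int a - 1 + s) mod N + 1"
  have w1: "1 \<le> w" "w \<le> N" using N pos_mod_bound[OF N, of "int a - 1 + s"] pos_mod_sign[OF N, of "int a - 1 + s"] unfolding w_def by linarith+
  have weq: "w = int a + s - N * q" unfolding w_def q_def using minus_div_mult_eq_mod[of "int a - 1 + s" N] by (simp add: algebra_simps)
  define v where "v = nat w"
  have vint: "int v = w" using w1 v_def by simp
  have v1: "v \<in> {1..n}" using w1 vint N_def by auto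
  have e1: "int a - int v = - s + q * N" using vint weq by (simp add: algebra_simps)
  have "(int a - int v) mod N = (- s) mod N"
    unfolding e1 by (rule mod_mult_self1)
  then have "DD N (int a - int v) = DD N (-s)" by (rule D_cong)
  also have "\<dots> = int M - int k"
    using D_small[of "int M - int k" N] D_neg[of N "int M - int k"] k N hM unfolding s_def by auto
  finally have c1: "cdist n a v = M - k" unfolding cdist_D N_def using k by simp
  have e2: "int v - int b = (s - (int b - int a)) + (- q) * N" using vint weq by (simp add: algebra_simps)
  have "(int v - int b) mod N = (s - (int b - int a)) mod N"
    unfolding e2 by (rule mod_mult_self1)
  also have "\<dots> = (s - z') mod N" using z(1) by (metis mod_diff_cong mod_mod_trivial)
  finally have "DD N (int v - int b) = DD N (s - z')" by (rule D_cong)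
  also have "\<dots> = int k"
  proof (cases "z' \<ge> 0")
    case True
    then have "s - z' = - int k" using z s_def by simp
    then show ?thesis using D_small[of "int k" N] D_neg k N hM by auto
  next
    case False
    then have "s - z' = int k" using z s_def by simp
    then show ?thesis using D_small[of "int k" N] k N hM by auto
  qed
  finally have c2: "cdist n v b = k" unfolding cdist_D N_def by simp
  show ?thesis using v1 c1 c2 by blast
qed

lemma swap_bound:
  assumes n: "n > 0" and xy: "M \<le> cdist n x y" and av: "cdist n a v = M - k" and k: "k \<le> M"
  shows "k \<le> cdist n (transpose a v x) (transpose a v y)"
proof -
  have t1: "cdist n a y \<le> cdist n a v + cdist n v y" for y using cdist_tri[OF n] by blast
  have t2: "cdist n x a \<le> cdist n x v + cdist n v a" for x using cdist_tri[OF n] by blast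
  have t3: "cdist n v y \<le> cdist n v a + cdist n a y" for y using cdist_tri[OF n] by blast
  have t4: "cdist n x v \<le> cdist n x a + cdist n a v" for x using cdist_tri[OF n] by blast
  have s: "cdist n v a = M - k" using av cdist_sym by metis
  show ?thesis
  proof (cases "x = y")
    case True then show ?thesis using xy k by (simp add: cdist_self)
  next
    case False
    consider "x = a" "y = v" | "x = v" "y = a" | "x = a" "y \<noteq> v" "y \<noteq> a" | "x = v" "y \<noteq> v" "y \<noteq> a"
      | "y = a" "x \<noteq> v" "x \<noteq> a" | "y = v" "x \<noteq> v" "x \<noteq> a" | "x \<noteq> a" "x \<noteq> v" "y \<noteq> a" "y \<noteq> v"
      using False by blast
    then show ?thesis
    proof cases
      case 1 then show ?thesis using xy s av k by (simp add: transpose_def cdist_sym)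
    next
      case 2 then show ?thesis using xy s av k by (simp add: transpose_def cdist_sym)
    next
      case 3 then show ?thesis using xy t1[of y] av k by (simp add: transpose_def)
    next
      case 4 then show ?thesis using xy t3[of y] s k by (simp add: transpose_def)
    next
      case 5 then show ?thesis using xy t2[of x] s k by (simp add: transpose_def)
    next
      case 6 then show ?thesis using xy t4[of x] av k by (simp add: transpose_def)
    next
      case 7 then show ?thesis using xy k by (simp add: transpose_def)
    qed
  qed
qed

lemma adj_in: "((i, j), (i', j')) \<in> adjacent_cells n \<Longrightarrow> i \<in> {1..n} \<and> j \<in> {1..n} \<and> i' \<in> {1..n} \<and> j' \<in> {1..n}"
  unfolding adjacent_cells_def by auto

lemma adj_finite: "finite (adjacent_cells n)"
proof -
  have "adjacent_cells n \<subseteq> ({1..n} \<times> {1..n}) \<times> ({1..n} \<times> {1..n})"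
    unfolding adjacent_cells_def by auto
  then show ?thesis by (rule finite_subset) auto
qed

lemma adj_ne: "n \<ge> 2 \<Longrightarrow> ((1,1),(1,2)) \<in> adjacent_cells n"
  unfolding adjacent_cells_def by auto

lemma id_le: "n \<ge> 2 \<Longrightarrow> inner_distance n L \<le> n"
proof -
  assume n: "n \<ge> 2"
  have "inner_distance n L \<le> cdist n (L 1 1) (L 1 2)"
    unfolding inner_distance_def using adj_finite adj_ne[OF n]
    by (metis (no_types, lifting) Min_le finite_imageI image_eqI case_prod_conv)
  also have "\<dots> \<le> n" using cdist_le n by simp
  finally show ?thesis .
qed

lemma id_min: assumes "n \<ge> 2"
  shows "\<exists>i j i' j'. ((i, j), (i', j')) \<in> adjacent_cells n \<and> cdist n (L i j) (L i' j') = inner_distance n L"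
    "\<forall>i j i' j'. ((i, j), (i', j')) \<in> adjacent_cells n \<longrightarrow> inner_distance n L \<le> cdist n (L i j) (L i' j')"
proof -
  let ?f = "(\<lambda>((i, j), (i', j')). cdist n (L i j) (L i' j'))"
  have fin: "finite (?f ` adjacent_cells n)" using adj_finite by simp
  have ne: "?f ` adjacent_cells n \<noteq> {}" using adj_ne[OF assms] by blast
  have "inner_distance n L \<in> ?f ` adjacent_cells n" unfolding inner_distance_def using Min_in[OF fin ne] .
  then show "\<exists>i j i' j'. ((i, j), (i', j')) \<in> adjacent_cells n \<and> cdist n (L i j) (L i' j') = inner_distance n L"
    by force
  show "\<forall>i j i' j'. ((i, j), (i', j')) \<in> adjacent_cells n \<longrightarrow> inner_distance n L \<le> cdist n (L i j) (L i' j')"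
  proof (intro allI impI)
    fix i j i' j' assume "((i, j), (i', j')) \<in> adjacent_cells n"
    then have "cdist n (L i j) (L i' j') \<in> ?f ` adjacent_cells n" by force
    then show "inner_distance n L \<le> cdist n (L i j) (L i' j')" unfolding inner_distance_def using Min_le[OF fin] by blast
  qed
qed

lemma id_eq: assumes "n \<ge> 2"
  and "((i0, j0), (i0', j0')) \<in> adjacent_cells n" "cdist n (L i0 j0) (L i0' j0') = k"
  and "\<forall>i j i' j'. ((i, j), (i', j')) \<in> adjacent_cells n \<longrightarrow> k \<le> cdist n (L i j) (L i' j')"
  shows "inner_distance n L = k"
  unfolding inner_distance_def
proof (rule Min_eqI)
  show "finite ((\<lambda>((i, j), (i', j')). cdist n (L i j) (L i' j')) ` adjacent_cells n)" using adj_finite by simp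
  show "k \<in> (\<lambda>((i, j), (i', j')). cdist n (L i j) (L i' j')) ` adjacent_cells n"
    using assms(2,3) by force
  fix y assume "y \<in> (\<lambda>((i, j), (i', j')). cdist n (L i j) (L i' j')) ` adjacent_cells n"
  then show "k \<le> y" using assms(4) by force
qed

theorem mainTheorem3:
  fixes n :: nat and X :: "(nat \<Rightarrow> nat \<Rightarrow> nat) set"
  assumes "n \<ge> 5"
    and "X \<noteq> {}"
    and "\<forall>L\<in>X. latin_square n L"
    and "\<forall>L\<in>X. \<forall>\<sigma>. \<sigma> permutes {1..n} \<longrightarrow> perm_square n \<sigma> L \<in> X"
  shows "\<forall>k::nat. 1 \<le> k \<and> k \<le> Max (inner_distance n ` X) \<longrightarrow>
           (\<exists>L\<in>X. inner_distance n L = k)"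
proof (intro allI impI)
  fix k :: nat assume kk: "1 \<le> k \<and> k \<le> Max (inner_distance n ` X)"
  have n2: "n \<ge> 2" and n0: "n > 0" using assms(1) by auto
  define M where "M = Max (inner_distance n ` X)"
  have fin: "finite (inner_distance n ` X)"
    by (rule finite_subset[of _ "{..n}"]) (use id_le[OF n2] in auto)
  have "M \<in> inner_distance n ` X" unfolding M_def using Max_in[OF fin] assms(2) by blast
  then obtain L where L: "L \<in> X" "inner_distance n L = M" by blast
  have lat: "latin_square n L" using assms(3) L by blast
  obtain i j i' j' where p: "((i, j), (i', j')) \<in> adjacent_cells n" "cdist n (L i j) (L i' j') = M"
    using id_min(1)[OF n2, of L] L(2) by metis
  have allM: "\<forall>i j i' j'. ((i, j), (i', j')) \<in> adjacent_cells n \<longrightarrow> M \<le> cdist n (L i j) (L i' j')"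
    using id_min(2)[OF n2, of L] L(2) by metis
  have inS: "L x y \<in> {1..n}" if "x \<in> {1..n}" "y \<in> {1..n}" for x y
    using lat that unfolding latin_square_def bij_betw_def by blast
  have pin: "i \<in> {1..n} \<and> j \<in> {1..n} \<and> i' \<in> {1..n} \<and> j' \<in> {1..n}" using adj_in[OF p(1)] .
  have k: "k \<le> M" "1 \<le> k" using kk M_def by auto
  obtain v where v: "v \<in> {1..n}" "cdist n (L i j) v = M - k" "cdist n v (L i' j') = k"
  proof -
    have "L i j \<in> {1..n}" "L i' j' \<in> {1..n}" using inS pin by auto
    then show ?thesis using exists_v[OF n0 _ _ p(2) k(1)] that by blast
  qed
  define \<sigma> where "\<sigma> = transpose (L i j) v"
  have perm: "\<sigma> permutes {1..n}" unfolding \<sigma>_def using permutes_swap_id[OF inS v(1)] pin by blast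
  define L' where "L' = perm_square n \<sigma> L"
  have L'X: "L' \<in> X" using assms(4) L(1) perm L'_def by blast
  have L'eq: "L' x y = \<sigma> (L x y)" if "x \<in> {1..n}" "y \<in> {1..n}" for x y
    using that unfolding L'_def perm_square_def by simp
  have "inner_distance n L' = k"
  proof (rule id_eq[OF n2 p(1)])
    have "L i' j' \<noteq> L i j"
      using p(2) k cdist_self[of n "L i j"] by auto
    moreover have "L i' j' \<noteq> v" using v(3) k cdist_self[of n v] by auto
    ultimately have "\<sigma> (L i' j') = L i' j'" unfolding \<sigma>_def by simp
    moreover have "\<sigma> (L i j) = v" unfolding \<sigma>_def by simp
    ultimately show "cdist n (L' i j) (L' i' j') = k" using L'eq pin v(3) by simp
    show "\<forall>i j i' j'. ((i, j), (i', j')) \<in> adjacent_cells n \<longrightarrow> k \<le> cdist n (L' i j) (L' i' j')"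
    proof (intro allI impI)
      fix a b c d assume q: "((a, b), (c, d)) \<in> adjacent_cells n"
      have "M \<le> cdist n (L a b) (L c d)" using allM q by blast
      then have "k \<le> cdist n (\<sigma> (L a b)) (\<sigma> (L c d))"
        unfolding \<sigma>_def using swap_bound[OF n0 _ v(2) k(1)] by blast
      then show "k \<le> cdist n (L' a b) (L' c d)" using L'eq adj_in[OF q] by simp
    qed
  qed
  then show "\<exists>L\<in>X. inner_distance n L = k" using L'X by blast
qed

end
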